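(* Let $1<q<p<\infty$. Let $M\in\mathcal C^3$ be a normalized Orlicz function with $M'(0)=0$ that is linear on $[M^{-1}(1),\infty)$, such that $\lim_{t\to0^+}M''(t)/t^{q-2}$ exists in $\overline{\mathbb R}$, such that for some constant $C>0$ \[ \int_0^s\frac{M(t)}{t^q}\,\frac{dt}{t}\le C\frac{M(s)}{s^q}\qquad\text{for all }0<s\le M^{-1}(1), \] and such that $f(x)=\big(1-\frac2p\big)x^{-3}M''(x^{-1})-\frac1px^{-4}M'''(x^{-1})$ is non-negative for all $x>0$. Let $X$ be a positive random variable with density $f$. Then $X^q$ is integrable.
   Context: An Orlicz function is a convex $M:[0,\infty)\to[0,\infty)$ with $M(0)=0$, $M(t)>0$ for $t>0$; it is normalized if $\int_0^\infty x\,\mathrm dM'(x)=1$, $M'$ denoting the right derivative. *)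

theory Defs
  imports "HOL-Analysis.Analysis" "HOL-Probability.Probability"
begin

text \<open>Orlicz functions are modelled as real functions; only their values on [0,inf) matter.\<close>

definition orlicz_function :: "(real \<Rightarrow> real) \<Rightarrow> bool" where
  "orlicz_function M \<longleftrightarrow> convex_on {0..} M \<and> M 0 = 0 \<and> (\<forall>t>0. M t > 0)"

definition right_deriv :: "(real \<Rightarrow> real) \<Rightarrow> real \<Rightarrow> real" where
  "right_deriv M x = Lim (at_right 0) (\<lambda>h. (M (x + h) - M x) / h)"

text \<open>Normalization: the Lebesgue-Stieltjes integral of x with respect to dM' over [0,inf) is 1.
  M' is extended to the whole line as a constant on (-inf,0], so the Stieltjes measure
  puts no mass on (-inf,0).\<close>
definition normalized_orlicz :: "(real \<Rightarrow> real) \<Rightarrow> bool" where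
  "normalized_orlicz M \<longleftrightarrow>
     (\<integral>\<^sup>+ x \<in> {0..}. ennreal x \<partial>(interval_measure (\<lambda>t. right_deriv M (max t 0)))) = 1"

definition orlicz_inv :: "(real \<Rightarrow> real) \<Rightarrow> real \<Rightarrow> real" where
  "orlicz_inv M y = (THE s. 0 \<le> s \<and> M s = y)"

end

theory Submission
  imports Defs
begin


locale L =
  fixes p q C :: real and M M1 M2 M3 :: "real \<Rightarrow> real"
  assumes qp: "1 < q" "q < p"
    and orl: "orlicz_function M"
    and C3: "\<And>x. x \<ge> 0 \<Longrightarrow> (M has_real_derivative M1 x) (at x within {0..})"
            "\<And>x. x \<ge> 0 \<Longrightarrow> (M1 has_real_derivative M2 x) (at x within {0..})"
            "\<And>x. x \<ge> 0 \<Longrightarrow> (M2 has_real_derivative M3 x) (at x within {0..})"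
            "continuous_on {0..} M3"
    and lin: "\<exists>\<alpha> \<beta>. \<forall>t \<ge> orlicz_inv M 1. M t = \<alpha> * t + \<beta>"
begin

lemma dM: "u > 0 \<Longrightarrow> (M has_real_derivative M1 u) (at u)"
  and dM1: "u > 0 \<Longrightarrow> (M1 has_real_derivative M2 u) (at u)"
  and dM2: "u > 0 \<Longrightarrow> (M2 has_real_derivative M3 u) (at u)"
proof -
  assume u: "u > 0"
  have o: "at u within {0<..} = at u" using u by (intro at_within_open) auto
  have "(M has_real_derivative M1 u) (at u within {0<..})"
    by (rule has_field_derivative_subset[OF C3(1)]) (use u in auto)
  then show "(M has_real_derivative M1 u) (at u)" using o by simp
  have "(M1 has_real_derivative M2 u) (at u within {0<..})"
    by (rule has_field_derivative_subset[OF C3(2)]) (use u in auto)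
  then show "(M1 has_real_derivative M2 u) (at u)" using o by simp
  have "(M2 has_real_derivative M3 u) (at u within {0<..})"
    by (rule has_field_derivative_subset[OF C3(3)]) (use u in auto)
  then show "(M2 has_real_derivative M3 u) (at u)" using o by simp
qed

lemma contM: "continuous_on {0..} M" "continuous_on {0..} M1" "continuous_on {0..} M2"
  using C3 by (auto intro!: DERIV_continuous_on)

lemma Mpos: "t > 0 \<Longrightarrow> M t > 0" and M0: "M 0 = 0"
  using orl by (auto simp: orlicz_function_def)

lemma Mconv: "0 \<le> s \<Longrightarrow> s \<le> t \<Longrightarrow> t > 0 \<Longrightarrow> M s \<le> (s / t) * M t"
proof -
  assume s: "0 \<le> s" "s \<le> t" "t > 0"
  have cv: "convex_on {0..} M" using orl by (simp add: orlicz_function_def)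
  have "M ((1 - s/t) *\<^sub>R 0 + (s/t) *\<^sub>R t) \<le> (1 - s/t) * M 0 + (s/t) * M t"
    using s by (intro convex_onD[OF cv]) auto
  then show ?thesis using s M0 by simp
qed

lemma Mstrict: "0 \<le> s \<Longrightarrow> s < t \<Longrightarrow> M s < M t"
proof -
  assume s: "0 \<le> s" "s < t"
  have "M s \<le> (s/t) * M t" using Mconv[of s t] s by auto
  also have "\<dots> < M t" using s Mpos[of t] by (auto simp: field_simps intro: mult_strict_right_mono)
  finally show ?thesis .
qed

definition "a0 = orlicz_inv M 1"

lemma a0: "a0 > 0" "M a0 = 1"
proof -
  define T where "T = max 1 (1 / M 1)"
  have M1p: "M 1 > 0" using Mpos by simp
  have "M 1 \<le> (1/T) * M T" using Mconv[of 1 T] by (simp add: T_def)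
  then have "T * M 1 \<le> M T" using T_def by (simp add: field_simps)
  moreover have "1 \<le> T * M 1"
  proof -
    have "1 / M 1 \<le> T" by (simp add: T_def)
    then show ?thesis using M1p by (simp add: divide_le_eq mult.commute)
  qed
  ultimately have "1 \<le> M T" by linarith
  then obtain s where s: "0 \<le> s" "s \<le> T" "M s = 1"
  proof -
    have "continuous_on {0..T} M" using contM(1) by (rule continuous_on_subset) auto
    moreover have "0 \<le> T" by (simp add: T_def)
    ultimately show ?thesis using IVT'[of M 0 1 T] M0 \<open>1 \<le> M T\<close> that by auto
  qed
  have uniq: "\<And>s'. 0 \<le> s' \<and> M s' = 1 \<Longrightarrow> s' = s"
  proof -
    fix s' assume h: "0 \<le> s' \<and> M s' = 1"
    show "s' = s"
    proof (rule ccontr)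
      assume "s' \<noteq> s"
      then consider "s' < s" | "s < s'" by linarith
      then show False
      proof cases
        case 1 then show ?thesis using Mstrict[of s' s] h s by simp
      next
        case 2 then show ?thesis using Mstrict[of s s'] h s by simp
      qed
    qed
  qed
  have "a0 = s" unfolding a0_def orlicz_inv_def
  proof (rule the1_equality)
    show "\<exists>!x. 0 \<le> x \<and> M x = 1" using uniq s by blast
    show "0 \<le> s \<and> M s = 1" using s by simp
  qed
  then show "a0 > 0" using s M0 by (metis less_eq_real_def zero_neq_one)
  show "M a0 = 1" using \<open>a0 = s\<close> s by simp
qed

lemma lin_consts: "u > a0 \<Longrightarrow> M2 u = 0" "u > a0 \<Longrightarrow> M3 u = 0"
proof -
  obtain \<alpha> \<beta> where ab: "\<And>t. t \<ge> a0 \<Longrightarrow> M t = \<alpha> * t + \<beta>"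
    using lin unfolding a0_def by blast
  have M1c: "M1 v = \<alpha>" if v: "v > a0" for v
  proof -
    have "((\<lambda>t. \<alpha> * t + \<beta>) has_real_derivative M1 v) (at v)"
      by (rule has_field_derivative_transform_within_open[OF dM[of v], of "{a0<..}"])
        (use v a0 ab in auto)
    moreover have "((\<lambda>t. \<alpha> * t + \<beta>) has_real_derivative \<alpha>) (at v)"
      by (auto intro!: derivative_eq_intros)
    ultimately show ?thesis using DERIV_unique by blast
  qed
  have M2c: "M2 v = 0" if v: "v > a0" for v
  proof -
    have "((\<lambda>t. \<alpha>) has_real_derivative M2 v) (at v)"
      by (rule has_field_derivative_transform_within_open[OF dM1[of v], of "{a0<..}"])
        (use v a0 M1c in auto)
    moreover have "((\<lambda>t. \<alpha>) has_real_derivative 0) (at v)"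
      by (auto intro!: derivative_eq_intros)
    ultimately show ?thesis using DERIV_unique by blast
  qed
  show "u > a0 \<Longrightarrow> M2 u = 0" by (rule M2c)
  assume u: "u > a0"
  have "((\<lambda>t. 0) has_real_derivative M3 u) (at u)"
    by (rule has_field_derivative_transform_within_open[OF dM2[of u], of "{a0<..}"])
      (use u a0 M2c in auto)
  moreover have "((\<lambda>t. 0) has_real_derivative 0) (at u)"
    by (auto intro!: derivative_eq_intros)
  ultimately show "M3 u = 0" using DERIV_unique by blast
qed

lemma M1nn: "u > 0 \<Longrightarrow> M1 u \<ge> 0"
proof (rule ccontr)
  assume u: "u > 0" and "\<not> M1 u \<ge> 0"
  then have "M1 u < 0" by simp
  from DERIV_neg_dec_right[OF dM[OF u] this] obtain d where d: "d > 0"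
    "\<And>h. h > 0 \<Longrightarrow> h < d \<Longrightarrow> M (u + h) < M u" by blast
  have "M (u + d/2) < M u" using d by auto
  moreover have "M u < M (u + d/2)" using Mstrict[of u "u + d/2"] u d by auto
  ultimately show False by simp
qed

lemma pw: "x > 0 \<Longrightarrow> x powr (q - 1) = x powr q / x"
  "x > 0 \<Longrightarrow> x powr (q - 2) = x powr q / x^2"
  "x > 0 \<Longrightarrow> x powr (q - 3) = x powr q / x^3"
  "x > 0 \<Longrightarrow> x powr (q - 4) = x powr q / x^4"
  "x > 0 \<Longrightarrow> x powr (-3) = 1 / x^3"
  "x > 0 \<Longrightarrow> x powr (-4) = 1 / x^4"
proof -
  assume x: "x > 0"
  have e: "x powr (real n) = x ^ n" for n using powr_realpow[OF x] by simp
  have e2: "x powr 2 = x^2" "x powr 3 = x^3" "x powr 4 = x^4"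
    using e[of 2] e[of 3] e[of 4] by simp_all
  show "x powr (q - 1) = x powr q / x" using x by (simp add: powr_diff)
  show "x powr (q - 2) = x powr q / x^2" using x e2 by (simp add: powr_diff)
  show "x powr (q - 3) = x powr q / x^3" using x e2 by (simp add: powr_diff)
  show "x powr (q - 4) = x powr q / x^4" using x e2 by (simp add: powr_diff)
  show "x powr (-3) = 1 / x^3" using e2 by (simp add: powr_minus_divide)
  show "x powr (-4) = 1 / x^4" using e2 by (simp add: powr_minus_divide)
qed

lemma dinv: "x > 0 \<Longrightarrow> ((\<lambda>x. 1 / x) has_real_derivative - (1 / x^2)) (at x)"
  by (auto intro!: derivative_eq_intros simp: power2_eq_square)

definition "H x = x powr (q - 2) * M2 (1 / x)"
definition "H' x = (q - 2) * x powr (q - 3) * M2 (1 / x) - x powr (q - 4) * M3 (1 / x)"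
definition "G2 x = - (q - 1) * x powr q * M (1 / x) - x powr (q - 1) * M1 (1 / x)"
definition "G2' x = x powr (q - 3) * M2 (1 / x) - (q - 1) * q * x powr (q - 1) * M (1 / x)"

lemma dH: "x > 0 \<Longrightarrow> (H has_real_derivative H' x) (at x)"
proof -
  assume x: "x > 0"
  have d1: "((\<lambda>x. M2 (1 / x)) has_real_derivative M3 (1/x) * (- (1 / x^2))) (at x)"
    by (rule DERIV_chain2[OF dM2 dinv]) (use x in auto)
  show "(H has_real_derivative H' x) (at x)"
    unfolding H_def
  proof (rule DERIV_cong[OF DERIV_mult[OF has_real_derivative_powr[OF x] d1]])
    show "(q - 2) * x powr (q - 2 - 1) * M2 (1 / x) + M3 (1 / x) * - (1 / x\<^sup>2) * x powr (q - 2) = H' x"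
      unfolding H'_def using x by (simp add: pw field_simps flip: diff_diff_eq)
  qed
qed


lemma dG2: "x > 0 \<Longrightarrow> (G2 has_real_derivative G2' x) (at x)"
proof -
  assume x: "x > 0"
  have d0: "((\<lambda>x. M (1 / x)) has_real_derivative M1 (1/x) * (- (1 / x^2))) (at x)"
    by (rule DERIV_chain2[OF dM dinv]) (use x in auto)
  have d1: "((\<lambda>x. M1 (1 / x)) has_real_derivative M2 (1/x) * (- (1 / x^2))) (at x)"
    by (rule DERIV_chain2[OF dM1 dinv]) (use x in auto)
  show "(G2 has_real_derivative G2' x) (at x)"
    unfolding G2_def
  proof (rule DERIV_cong[OF DERIV_diff[OF DERIV_mult[OF DERIV_cmult[OF has_real_derivative_powr[OF x]] d0]
      DERIV_mult[OF has_real_derivative_powr[OF x] d1]]])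
    show "- (q - 1) * (q * x powr (q - 1)) * M (1 / x) + M1 (1 / x) * - (1 / x\<^sup>2) * (- (q - 1) * x powr q) -
        ((q - 1) * x powr (q - 1 - 1) * M1 (1 / x) + M2 (1 / x) * - (1 / x\<^sup>2) * x powr (q - 1)) = G2' x"
      unfolding G2'_def using x by (simp add: pw field_simps flip: diff_diff_eq) (simp add: eval_nat_numeral)
  qed
qed

definition "b = 1 / a0"
lemma b: "b > 0" using a0 by (simp add: b_def)

lemma ftc: assumes "b \<le> T" "\<And>x. x > 0 \<Longrightarrow> (F has_real_derivative F' x) (at x)"
  shows "(F' has_integral (F T - F b)) {b..T}"
proof (rule fundamental_theorem_of_calculus[OF assms(1)])
  fix x assume "x \<in> {b..T}"
  then have "x > 0" using b by auto
  then show "(F has_vector_derivative F' x) (at x within {b..T})"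
    using assms(2) has_field_derivative_at_within has_real_derivative_iff_has_vector_derivative by blast
qed

lemma cont_comp: fixes g :: "real \<Rightarrow> real" and S :: "real set" assumes "continuous_on {0..} g" "S \<subseteq> {0<..}"
  shows "continuous_on S (\<lambda>x. g (1 / x))"
proof (rule continuous_on_compose2[OF assms(1)])
  show "continuous_on S (\<lambda>x. 1 / x)"
    using assms(2) by (intro continuous_on_divide continuous_intros) auto
  show "(\<lambda>x. 1 / x) ` S \<subseteq> {0..}" using assms(2) by force
qed

end

context L begin

definition "phi u = M u / u powr q / u"

lemma hasPhi: assumes T: "b \<le> T"
  shows "((\<lambda>x. x powr (q - 1) * M (1 / x)) has_integral (integral {1/T..a0} phi)) {b..T}"
proof -
  have T0: "T > 0" using b T by simp
  have sub: "(\<lambda>x. 1/x) ` {b..T} \<subseteq> {1/T..a0}"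
  proof
    fix y assume "y \<in> (\<lambda>x. 1/x) ` {b..T}"
    then obtain x where x: "x \<in> {b..T}" "y = 1/x" by auto
    have "1/T \<le> 1/x" using x b by (intro divide_left_mono) auto
    moreover have "1/x \<le> 1/b" using x b by (intro divide_left_mono) auto
    ultimately show "y \<in> {1/T..a0}" using x by (simp add: b_def)
  qed
  have cphi: "continuous_on {1/T..a0} phi"
    unfolding phi_def using T0
    by (intro continuous_intros continuous_on_subset[OF contM(1)]) auto
  have "((\<lambda>x. (- (1 / x^2)) *\<^sub>R phi (1 / x)) has_integral (integral {1/b..1/T} phi - integral {1/T..1/b} phi)) {b..T}"
  proof (rule has_integral_substitution_general[of "{}", OF _ T sub cphi])
    show "continuous_on {b..T} (\<lambda>x. 1 / x)" using b by (intro continuous_intros) auto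
    fix x assume "x \<in> {b..T} - {}"
    then have "x > 0" using b by auto
    then show "((\<lambda>x. 1 / x) has_real_derivative - (1 / x^2)) (at x within {b..T})"
      using dinv has_field_derivative_at_within by blast
  qed auto
  moreover have "integral {1/b..1/T} phi = 0"
  proof (cases "T = b")
    case True then show ?thesis by simp
  next
    case False then have "1/T < 1/b" using T b by (simp add: frac_less2)
    then show ?thesis by simp
  qed
  moreover have "1 / b = a0" by (simp add: b_def)
  moreover have "(- (1 / x^2)) *\<^sub>R phi (1 / x) = - (x powr (q - 1) * M (1 / x))" if "x \<in> {b..T}" for x
  proof -
    have x: "x > 0" using that b by auto
    have "(1/x) powr q = 1 / x powr q" using x by (simp add: powr_divide)
    then have "phi (1/x) = M (1/x) * x powr q * x" unfolding phi_def using x by simp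
    then show ?thesis using x by (simp add: pw power2_eq_square)
  qed
  ultimately have "((\<lambda>x. - (x powr (q - 1) * M (1 / x))) has_integral - integral {1/T..a0} phi) {b..T}"
    using has_integral_cong[of "{b..T}" "\<lambda>x. (- (1 / x^2)) *\<^sub>R phi (1 / x)" "\<lambda>x. - (x powr (q - 1) * M (1 / x))"]
    by simp
  from has_integral_neg[OF this] show ?thesis by simp
qed

lemma cphi: "0 < c \<Longrightarrow> continuous_on {c..d} phi"
  unfolding phi_def by (intro continuous_intros continuous_on_subset[OF contM(1)]) auto

definition "J T = G2 T - G2 b + (q - 1) * q * integral {1/T..a0} phi"

lemma J_has: assumes T: "b \<le> T"
  shows "((\<lambda>x. x powr (q - 3) * M2 (1 / x)) has_integral J T) {b..T}"
proof -
  have "((\<lambda>x. G2' x + (q - 1) * q * (x powr (q - 1) * M (1 / x))) has_integral J T) {b..T}"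
    unfolding J_def by (intro has_integral_add has_integral_mult_right ftc[OF T] dG2 hasPhi[OF T])
  moreover have "G2' x + (q - 1) * q * (x powr (q - 1) * M (1 / x)) = x powr (q - 3) * M2 (1 / x)" for x
    unfolding G2'_def by (simp add: algebra_simps)
  ultimately show ?thesis by simp
qed

lemma G2_le: "T > 0 \<Longrightarrow> G2 T \<le> 0"
proof -
  assume T: "T > 0"
  have "0 \<le> (q - 1) * T powr q * M (1 / T)" using qp Mpos[of "1/T"] T by simp
  moreover have "0 \<le> T powr (q - 1) * M1 (1 / T)" using M1nn[of "1/T"] T by simp
  moreover have "G2 T = - ((q - 1) * T powr q * M (1 / T)) - T powr (q - 1) * M1 (1 / T)"
    unfolding G2_def by (simp add: algebra_simps)
  ultimately show ?thesis by linarith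
qed

definition "fd x = (1 - 2 / p) * x powr (-3) * M2 (1 / x) - (1 / p) * x powr (-4) * M3 (1 / x)"

definition "F T = (1 - q / p) * J T + (1 / p) * (H T - H b)"

lemma F_has: assumes T: "b \<le> T"
  shows "((\<lambda>x. x powr q * fd x) has_integral F T) {b..T}"
proof -
  have "((\<lambda>x. (1 - q / p) * (x powr (q - 3) * M2 (1 / x)) + (1 / p) * H' x) has_integral F T) {b..T}"
    unfolding F_def by (intro has_integral_add has_integral_mult_right ftc[OF T] dH J_has[OF T])
  moreover have "(1 - q / p) * (x powr (q - 3) * M2 (1 / x)) + (1 / p) * H' x = x powr q * fd x"
    if "x \<in> {b..T}" for x
  proof -
    have x: "x > 0" using that b by auto
    have p0: "p > 0" using qp by simp
    show ?thesis unfolding H'_def fd_def using x p0 by (simp add: pw field_simps)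
  qed
  ultimately show ?thesis using has_integral_cong[of "{b..T}"] by (metis (no_types, lifting))
qed

end

locale L2 = L +
  assumes Cpos: "C > 0"
    and intc: "\<And>s. 0 < s \<Longrightarrow> s \<le> orlicz_inv M 1 \<Longrightarrow>
       (\<integral>\<^sup>+ t \<in> {0<..s}. ennreal (M t / t powr q / t) \<partial>lborel) \<le> ennreal (C * M s / s powr q)"
    and lim: "\<exists>L :: ereal. ((\<lambda>t. ereal (M2 t / t powr (q - 2))) \<longlongrightarrow> L) (at_right 0)"
begin

definition "K0 = C * M a0 / a0 powr q"

lemma Phi_le: assumes T: "b \<le> T" shows "integral {1/T..a0} phi \<le> K0"
proof -
  have T0: "T > 0" using T b by simp
  have hi: "(phi has_integral integral {1/T..a0} phi) {1/T..a0}"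
    using cphi[of "1/T" a0] T0 by (intro integrable_integral integrable_continuous_interval) auto
  have nn: "\<And>x. x \<in> {1/T..a0} \<Longrightarrow> 0 \<le> phi x"
  proof -
    fix x assume "x \<in> {1/T..a0}"
    then have "x > 0" using T0 by (auto intro: less_le_trans[of 0 "1/T"])
    then show "0 \<le> phi x" unfolding phi_def using Mpos[of x] by simp
  qed
  have "ennreal (integral {1/T..a0} phi) = (\<integral>\<^sup>+ x. ennreal (phi x) * indicator {1/T..a0} x \<partial>lborel)"
    using nn_integral_has_integral_lebesgue'[OF nn hi] by simp
  also have "\<dots> \<le> (\<integral>\<^sup>+ t \<in> {0<..a0}. ennreal (M t / t powr q / t) \<partial>lborel)"
  proof (rule nn_integral_mono)
    fix x show "ennreal (phi x) * indicator {1/T..a0} x \<le> ennreal (M x / x powr q / x) * indicator {0<..a0} x"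
      using T0 by (auto split: split_indicator simp: phi_def intro: less_le_trans[of 0 "1/T"])
  qed
  also have "\<dots> \<le> ennreal (C * M a0 / a0 powr q)"
    using intc[of a0] a0 by (simp add: a0_def)
  finally show ?thesis unfolding K0_def using Cpos a0 by (subst (asm) ennreal_le_iff) auto
qed

definition "Jmax = - G2 b + (q - 1) * q * K0"

lemma J_le: "b \<le> T \<Longrightarrow> J T \<le> Jmax"
proof -
  assume T: "b \<le> T"
  have "G2 T \<le> 0" using G2_le[of T] T b by simp
  moreover have "(q - 1) * q * integral {1/T..a0} phi \<le> (q - 1) * q * K0"
    using Phi_le[OF T] qp by (intro mult_left_mono) auto
  ultimately show ?thesis unfolding J_def Jmax_def by simp
qed

lemma H_alt: "x > 0 \<Longrightarrow> H x = M2 (1/x) / (1/x) powr (q - 2)"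
  unfolding H_def by (simp add: powr_divide)

lemma ev_small: assumes "eventually P (at_right (0::real))"
  obtains T0 where "T0 \<ge> b" "\<And>x. x \<ge> T0 \<Longrightarrow> P (1 / x)"
proof -
  obtain d where d: "d > 0" "\<And>y. y > 0 \<Longrightarrow> y < d \<Longrightarrow> P y"
    using assms unfolding eventually_at_right_field by auto
  define T0 where "T0 = max b (1/d) + 1"
  have "P (1 / x)" if x: "x \<ge> T0" for x
  proof -
    have x0: "x > 0" using x b by (simp add: T0_def)
    have "1/d < x" using x by (simp add: T0_def)
    then have "1/x < d" using d x0 by (simp add: field_simps)
    then show ?thesis using d x0 by simp
  qed
  moreover have "T0 \<ge> b" by (simp add: T0_def)
  ultimately show ?thesis using that by blast
qed

lemma cont_j: "0 < c \<Longrightarrow> continuous_on {c..d} (\<lambda>x. x powr (q - 3) * M2 (1 / x))"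
  by (intro continuous_intros cont_comp[OF contM(3)]) auto

lemma cont_H: "0 < c \<Longrightarrow> continuous_on {c..d} H"
  unfolding H_def by (intro continuous_intros cont_comp[OF contM(3)]) auto

lemma ln_has: fixes c d :: real assumes "0 < c" "c \<le> d" shows "((\<lambda>x. 1 / x) has_integral (ln d - ln c)) {c..d}"
proof -
  have "(ln has_vector_derivative 1 / x) (at x within {c..d})" if "x \<in> {c..d}" for x
  proof -
    have x: "x > 0" using that assms by auto
    have "(ln has_real_derivative 1 / x) (at x)" using x by (auto intro!: derivative_eq_intros)
    then show ?thesis
      using has_field_derivative_at_within has_real_derivative_iff_has_vector_derivative by blast
  qed
  from fundamental_theorem_of_calculus[of c d ln "\<lambda>x. 1 / x", OF assms(2) this] show ?thesis by simp
qed

lemma L_not_inf: "\<not> ((\<lambda>t. ereal (M2 t / t powr (q - 2))) \<longlongrightarrow> \<infinity>) (at_right 0)"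
proof
  assume Lt: "((\<lambda>t. ereal (M2 t / t powr (q - 2))) \<longlongrightarrow> \<infinity>) (at_right 0)"
  have "eventually (\<lambda>t. ereal 1 < ereal (M2 t / t powr (q - 2))) (at_right 0)"
    by (rule order_tendstoD(1)[OF Lt]) simp
  then obtain T0 where T0: "T0 \<ge> b" "\<And>x. x \<ge> T0 \<Longrightarrow> 1 < M2 (1/x) / (1/x) powr (q - 2)"
    by (rule ev_small) auto
  have T0p: "T0 > 0" using T0 b by simp
  have jge: "1 / x \<le> x powr (q - 3) * M2 (1 / x)" if x: "x \<ge> T0" for x
  proof -
    have x0: "x > 0" using x T0p by simp
    have "1 < H x" using T0(2)[OF x] H_alt[OF x0] by simp
    then have "1 / x < H x / x" using x0 by (simp add: divide_strict_right_mono)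
    also have "H x / x = x powr (q - 3) * M2 (1 / x)"
      unfolding H_def using x0 by (simp add: pw eval_nat_numeral)
    finally show ?thesis by simp
  qed
  have key: "ln T - ln T0 \<le> Jmax - J T0" if T: "T \<ge> T0" for T
  proof -
    have hi: "((\<lambda>x. x powr (q - 3) * M2 (1 / x)) has_integral integral {T0..T} (\<lambda>x. x powr (q - 3) * M2 (1 / x))) {T0..T}"
      using cont_j[OF T0p] by (intro integrable_integral integrable_continuous_interval)
    have "((\<lambda>x. x powr (q - 3) * M2 (1 / x)) has_integral (J T0 + integral {T0..T} (\<lambda>x. x powr (q - 3) * M2 (1 / x)))) {b..T}"
      by (rule has_integral_combine[OF T0(1) T J_has[OF T0(1)] hi])
    moreover have "b \<le> T" using T T0 by simp
    ultimately have "J T = J T0 + integral {T0..T} (\<lambda>x. x powr (q - 3) * M2 (1 / x))"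
      using has_integral_unique[OF J_has] by blast
    moreover have "ln T - ln T0 \<le> integral {T0..T} (\<lambda>x. x powr (q - 3) * M2 (1 / x))"
      by (rule has_integral_le[OF ln_has[OF T0p T] hi]) (use jge in auto)
    moreover have "J T \<le> Jmax" using J_le T T0 by simp
    ultimately show ?thesis by simp
  qed
  define T where "T = T0 * exp (Jmax - J T0 + 1)"
  have "J T0 \<le> Jmax" using J_le T0 by simp
  then have e1: "exp (Jmax - J T0 + 1) \<ge> 1" by simp
  have TT: "T \<ge> T0" unfolding T_def using e1 T0p by (simp add: mult_le_cancel_left1)
  have "ln T = ln T0 + (Jmax - J T0 + 1)" unfolding T_def using T0p by (simp add: ln_mult)
  then show False using key[OF TT] by simp
qed

lemma H_bdd: "\<exists>B. \<forall>T \<ge> b. H T \<le> B"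
proof -
  obtain L where Lt: "((\<lambda>t. ereal (M2 t / t powr (q - 2))) \<longlongrightarrow> L) (at_right 0)" using lim by blast
  have "L \<noteq> \<infinity>" using L_not_inf Lt by auto
  then obtain n where n: "L < ereal (real n)" using less_PInf_Ex_of_nat by blast
  have "eventually (\<lambda>t. ereal (M2 t / t powr (q - 2)) < ereal (real n)) (at_right 0)"
    by (rule order_tendstoD(2)[OF Lt n])
  then obtain T1 where T1: "T1 \<ge> b" "\<And>x. x \<ge> T1 \<Longrightarrow> M2 (1/x) / (1/x) powr (q - 2) < real n"
    by (rule ev_small) auto
  obtain xm where xm: "xm \<in> {b..T1}" "\<And>y. y \<in> {b..T1} \<Longrightarrow> H y \<le> H xm"
    using continuous_attains_sup[OF compact_Icc _ cont_H[OF b, of T1]] T1 by auto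
  have "H T \<le> max (real n) (H xm)" if T: "T \<ge> b" for T
  proof (cases "T \<le> T1")
    case True
    then have "H T \<le> H xm" using xm(2)[of T] T by simp
    then show ?thesis by simp
  next
    case False
    then have "H T < real n" using T1(2)[of T] H_alt[of T] T b by simp
    then show ?thesis by simp
  qed
  then show ?thesis by blast
qed

end

locale L3 = L2 +
  fixes P :: "'a measure" and X :: "'a \<Rightarrow> real"
  assumes fnn: "\<And>x. x > 0 \<Longrightarrow>
       (1 - 2 / p) * x powr (-3) * M2 (1 / x) - (1 / p) * x powr (-4) * M3 (1 / x) \<ge> 0"
    and Xdist: "distributed P lborel X
       (\<lambda>x. ennreal (indicator {0<..} x *
          ((1 - 2 / p) * x powr (-3) * M2 (1 / x) - (1 / p) * x powr (-4) * M3 (1 / x))))"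
begin

definition "dens x = ennreal (indicator {0<..} x *
          ((1 - 2 / p) * x powr (-3) * M2 (1 / x) - (1 / p) * x powr (-4) * M3 (1 / x)))"

lemma dens_meas[measurable]: "dens \<in> borel_measurable borel"
  using Xdist unfolding distributed_def dens_def by simp

lemma X_meas[measurable]: "X \<in> borel_measurable P"
  using Xdist unfolding distributed_def by simp

lemma fd_nn: "x > 0 \<Longrightarrow> fd x \<ge> 0" unfolding fd_def using fnn by simp

lemma fd0: "0 < x \<Longrightarrow> x < b \<Longrightarrow> fd x = 0"
proof -
  assume x: "0 < x" "x < b"
  then have "1 / b < 1 / x" by (simp add: frac_less2)
  then have "a0 < 1 / x" by (simp add: b_def)
  then show "fd x = 0" unfolding fd_def using lin_consts by simp
qed

definition "k x = dens x * ennreal (x powr q)"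

lemma k_meas[measurable]: "k \<in> borel_measurable borel"
  unfolding k_def by measurable

lemma keq: "k x * indicator {..T} x = ennreal (x powr q * fd x) * indicator {b..T} x"
proof (cases "x \<le> 0")
  case True then show ?thesis using b unfolding k_def dens_def by (simp split: split_indicator)
next
  case False
  then have x: "x > 0" by simp
  show ?thesis
  proof (cases "x < b")
    case True then show ?thesis using fd0[OF x True] x unfolding k_def dens_def fd_def[symmetric]
      by (simp split: split_indicator)
  next
    case False
    have "k x = ennreal (x powr q * fd x)"
      unfolding k_def dens_def fd_def[symmetric] using x fd_nn[OF x]
      by (simp add: ennreal_mult'' mult.commute)
    then show ?thesis using False by (simp split: split_indicator)
  qed
qed

lemma int_T: assumes T: "b \<le> T" shows "(\<integral>\<^sup>+ x. k x * indicator {..T} x \<partial>lborel) = ennreal (F T)"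
proof -
  have "(\<integral>\<^sup>+ x. k x * indicator {..T} x \<partial>lborel) = (\<integral>\<^sup>+ x. ennreal (x powr q * fd x) * indicator {b..T} x \<partial>lborel)"
    using keq by simp
  also have "\<dots> = ennreal (F T)"
    by (rule nn_integral_has_integral_lebesgue'[OF _ F_has[OF T]]) (use b fd_nn in auto)
  finally show ?thesis .
qed

lemma main: "integrable P (\<lambda>\<omega>. X \<omega> powr q)"
proof -
  obtain Hb where Hb: "\<And>T. T \<ge> b \<Longrightarrow> H T \<le> Hb" using H_bdd by blast
  define Fmax where "Fmax = (1 - q / p) * Jmax + (1 / p) * (Hb - H b)"
  have F_le: "F T \<le> Fmax" if T: "b \<le> T" for T
  proof -
    have p0: "p > 0" "1 - q / p \<ge> 0" using qp by (auto simp: field_simps)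
    have "(1 - q / p) * J T \<le> (1 - q / p) * Jmax" using J_le[OF T] p0 by (intro mult_left_mono) auto
    moreover have "(1 / p) * (H T - H b) \<le> (1 / p) * (Hb - H b)" using Hb[OF T] p0 by (intro mult_left_mono) auto
    ultimately show ?thesis unfolding F_def Fmax_def by linarith
  qed
  define f where "f n x = k x * indicator {..b + real n} x" for n x
  have inc: "incseq f"
    unfolding incseq_def le_fun_def f_def
    by (auto split: split_indicator)
  have sup: "(SUP n. f n x) = k x" for x
  proof (rule antisym)
    show "(SUP n. f n x) \<le> k x" unfolding f_def by (intro SUP_least) (auto split: split_indicator)
    obtain n where n: "x - b \<le> real n" using real_arch_simple by blast
    have "f n x = k x" unfolding f_def using n by (simp split: split_indicator)
    then show "k x \<le> (SUP n. f n x)" by (metis UNIV_I SUP_upper)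
  qed
  have "(\<integral>\<^sup>+ x. k x \<partial>lborel) = (SUP n. \<integral>\<^sup>+ x. f n x \<partial>lborel)"
    using nn_integral_monotone_convergence_SUP[OF inc] sup unfolding f_def by simp
  also have "\<dots> \<le> ennreal Fmax"
  proof (rule SUP_least)
    fix n
    have T: "b \<le> b + real n" by simp
    show "(\<integral>\<^sup>+ x. f n x \<partial>lborel) \<le> ennreal Fmax"
      unfolding f_def using int_T[OF T] F_le[OF T] by (simp add: ennreal_leI)
  qed
  also have "\<dots> < \<infinity>" by simp
  finally have fin: "(\<integral>\<^sup>+ x. k x \<partial>lborel) < \<infinity>" .
  have "(\<integral>\<^sup>+ x. k x \<partial>lborel) = (\<integral>\<^sup>+ \<omega>. ennreal (X \<omega> powr q) \<partial>P)"
    unfolding k_def dens_def by (rule distributed_nn_integral[OF Xdist]) measurable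
  then have "(\<integral>\<^sup>+ \<omega>. ennreal (norm (X \<omega> powr q)) \<partial>P) < \<infinity>" using fin by simp
  then show ?thesis by (intro integrableI_bounded) measurable
qed

end


theorem lemma4p3:
  fixes p q C :: real and M M1 M2 M3 :: "real \<Rightarrow> real"
    and P :: "'a measure" and X :: "'a \<Rightarrow> real"
  assumes qp: "1 < q" "q < p"
    and orl: "orlicz_function M" and norm: "normalized_orlicz M"
    and C3: "\<And>x. x \<ge> 0 \<Longrightarrow> (M has_real_derivative M1 x) (at x within {0..})"
            "\<And>x. x \<ge> 0 \<Longrightarrow> (M1 has_real_derivative M2 x) (at x within {0..})"
            "\<And>x. x \<ge> 0 \<Longrightarrow> (M2 has_real_derivative M3 x) (at x within {0..})"
            "continuous_on {0..} M3"
    and M1_0: "M1 0 = 0"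
    and lin: "\<exists>\<alpha> \<beta>. \<forall>t \<ge> orlicz_inv M 1. M t = \<alpha> * t + \<beta>"
    and lim: "\<exists>L :: ereal. ((\<lambda>t. ereal (M2 t / t powr (q - 2))) \<longlongrightarrow> L) (at_right 0)"
    and Cpos: "C > 0"
    and intc: "\<And>s. 0 < s \<Longrightarrow> s \<le> orlicz_inv M 1 \<Longrightarrow>
       (\<integral>\<^sup>+ t \<in> {0<..s}. ennreal (M t / t powr q / t) \<partial>lborel) \<le> ennreal (C * M s / s powr q)"
    and fnn: "\<And>x. x > 0 \<Longrightarrow>
       (1 - 2 / p) * x powr (-3) * M2 (1 / x) - (1 / p) * x powr (-4) * M3 (1 / x) \<ge> 0"
    and P: "prob_space P"
    and Xpos: "AE \<omega> in P. X \<omega> > 0"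
    and Xdist: "distributed P lborel X
       (\<lambda>x. ennreal (indicator {0<..} x *
          ((1 - 2 / p) * x powr (-3) * M2 (1 / x) - (1 / p) * x powr (-4) * M3 (1 / x))))"
  shows "integrable P (\<lambda>\<omega>. X \<omega> powr q)"
  proof -
  interpret L3 p q C M M1 M2 M3 P X
    apply unfold_locales
    using qp orl C3 lin Cpos intc lim fnn Xdist by simp_all
  show ?thesis by (rule main)
qed

end
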